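(* Let $n\ge1$ and $\vec p,\vec q\in[0,1]^n$. Let $I=\{i\in\{1,\dots,n\}:p_i\ge q_i\}$ and $J=\{1,\dots,n\}\setminus I$, and let $\vec p_I,\vec p_J,\vec q_I,\vec q_J$ be the corresponding subsequences of $\vec p,\vec q$. Then $$\mathrm{TV}(\mathrm{Ber}(\vec p),\mathrm{Ber}(\vec q))\ge\max\big(\mathrm{TV}(\mathrm{Ber}(\vec p_I),\mathrm{Ber}(\vec q_I)),\ \mathrm{TV}(\mathrm{Ber}(\vec p_J),\mathrm{Ber}(\vec q_J))\big)\ge\frac1{12}\max\big(\Phi(\vec p_I,\vec q_I),\Phi(\vec q_J,\vec p_J)\big).$$
   Context: For $\vec r=(r_1,\dots,r_m)\in[0,1]^m$, $\mathrm{Ber}(\vec r)=\mathrm{Ber}(r_1)\otimes\cdots\otimes\mathrm{Ber}(r_m)$ is the product Bernoulli measure on $\{0,1\}^m$. $\mathrm{TV}(P,Q)=\frac12\sum_\omega|P(\omega)-Q(\omega)|$ is the total variation distance. For $\vec a,\vec b\in[0,1]^m$, $\Phi(\vec a,\vec b)=\min\big(1,\Delta/\sqrt{\sigma_{\vec a}^2+1}\big)$ where $\Delta=\sum_{i}|a_i-b_i|$ and $\sigma_{\vec a}^2=\sum_i a_i(1-a_i)$. If $I$ or $J$ is empty, the corresponding TV and $\Phi$ terms are $0$. *)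

theory Defs
  imports "HOL-Analysis.Analysis"
begin

text \<open>A vector r in [0,1]^S is modelled as a function r :: nat => real on a finite
index set S. An outcome omega in {0,1}^S is represented by the set A \<subseteq> S of
coordinates equal to 1. Ber(r) assigns mass prod_{i in S} (r i if i in A else 1 - r i).\<close>

definition ber :: "nat set \<Rightarrow> (nat \<Rightarrow> real) \<Rightarrow> nat set \<Rightarrow> real" where
  "ber S r A = (\<Prod>i\<in>S. if i \<in> A then r i else 1 - r i)"

definition tv_ber :: "nat set \<Rightarrow> (nat \<Rightarrow> real) \<Rightarrow> (nat \<Rightarrow> real) \<Rightarrow> real" where
  "tv_ber S p q = (1/2) * (\<Sum>A\<in>Pow S. \<bar>ber S p A - ber S q A\<bar>)"

definition Phi :: "nat set \<Rightarrow> (nat \<Rightarrow> real) \<Rightarrow> (nat \<Rightarrow> real) \<Rightarrow> real" where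
  "Phi S a b = (if S = {} then 0 else
     min 1 ((\<Sum>i\<in>S. \<bar>a i - b i\<bar>) / sqrt ((\<Sum>i\<in>S. a i * (1 - a i)) + 1)))"

end

theory Submission
  imports Defs
begin


definition Ex :: "nat set \<Rightarrow> (nat \<Rightarrow> real) \<Rightarrow> (nat set \<Rightarrow> real) \<Rightarrow> real" where
  "Ex S r f = (\<Sum>A\<in>Pow S. ber S r A * f A)"

lemma ber_cong: "(\<And>i. i \<in> S \<Longrightarrow> r i = r' i) \<Longrightarrow> ber S r A = ber S r' A"
  unfolding ber_def by (rule prod.cong) auto

lemma pow_split:
  assumes "finite S" "j \<in> S"
  shows "(\<Sum>A\<in>Pow S. F A) = (\<Sum>B\<in>Pow (S - {j}). F B + F (insert j B))"
proof -
  have S: "S = insert j (S - {j})" using assms by auto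
  have P: "Pow S = Pow (S - {j}) \<union> insert j ` Pow (S - {j})"
    using S Pow_insert by metis
  have dj: "Pow (S - {j}) \<inter> insert j ` Pow (S - {j}) = {}" by auto
  have inj: "inj_on (insert j) (Pow (S - {j}))"
    unfolding inj_on_def by (metis Diff_insert_absorb PowD subset_Diff_insert)
  have fin: "finite (Pow (S - {j}))" using assms by simp
  show ?thesis
    unfolding P using fin dj inj
    by (simp add: sum.union_disjoint sum.reindex sum.distrib)
qed

lemma ber_out:
  assumes "finite S" "j \<in> S" "B \<subseteq> S - {j}"
  shows "ber S r B = (1 - r j) * ber (S - {j}) r B"
proof -
  have "ber S r B = (if j \<in> B then r j else 1 - r j) * ber (S - {j}) r B"
    unfolding ber_def using assms by (simp add: prod.remove)
  then show ?thesis using assms by auto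
qed

lemma ber_in:
  assumes "finite S" "j \<in> S"
  shows "ber S r (insert j B) = r j * ber (S - {j}) r B"
proof -
  have "ber S r (insert j B) = r j * (\<Prod>i\<in>S - {j}. if i \<in> insert j B then r i else 1 - r i)"
    unfolding ber_def using assms by (simp add: prod.remove)
  also have "(\<Prod>i\<in>S - {j}. if i \<in> insert j B then r i else 1 - r i) = ber (S - {j}) r B"
    unfolding ber_def by (rule prod.cong) auto
  finally show ?thesis .
qed

lemma Ex_split:
  assumes "finite S" "j \<in> S"
  shows "Ex S r f = (\<Sum>B\<in>Pow (S - {j}). ber (S - {j}) r B * ((1 - r j) * f B + r j * f (insert j B)))"
  unfolding Ex_def
  apply (subst pow_split[OF assms])
  apply (rule sum.cong[OF refl])
  using assms by (auto simp: ber_out ber_in algebra_simps)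

lemma ber_sum1: "finite S \<Longrightarrow> (\<Sum>A\<in>Pow S. ber S r A) = 1"
proof (induction S rule: finite_induct)
  case empty show ?case by (simp add: ber_def)
next
  case (insert x F)
  have "(\<Sum>A\<in>Pow (insert x F). ber (insert x F) r A) = Ex (insert x F) r (\<lambda>_. 1)"
    by (simp add: Ex_def)
  also have "\<dots> = (\<Sum>B\<in>Pow F. ber F r B)"
    using Ex_split[of "insert x F" x r "\<lambda>_. 1"] insert by (simp add: algebra_simps)
  finally show ?case using insert by simp
qed

lemma ber_nonneg: "(\<And>i. i \<in> S \<Longrightarrow> 0 \<le> r i \<and> r i \<le> 1) \<Longrightarrow> 0 \<le> ber S r A"
  unfolding ber_def by (rule prod_nonneg) auto

lemma ber_var: "finite S \<Longrightarrow>
  Ex S r (\<lambda>A. (real (card A) - (\<Sum>i\<in>S. r i))^2) = (\<Sum>i\<in>S. r i * (1 - r i))"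
proof (induction S rule: finite_induct)
  case empty show ?case by (simp add: ber_def Ex_def)
next
  case (insert x F)
  let ?mu = "\<Sum>i\<in>F. r i"
  have "Ex (insert x F) r (\<lambda>A. (real (card A) - (\<Sum>i\<in>insert x F. r i))^2)
     = (\<Sum>B\<in>Pow F. ber F r B * ((1 - r x) * (real (card B) - (r x + ?mu))^2
          + r x * (real (card (insert x B)) - (r x + ?mu))^2))"
    using Ex_split[of "insert x F" x r] insert by simp
  also have "\<dots> = (\<Sum>B\<in>Pow F. ber F r B * (real (card B) - ?mu)^2 + ber F r B * (r x * (1 - r x)))"
  proof (rule sum.cong[OF refl])
    fix B assume B: "B \<in> Pow F"
    then have "card (insert x B) = card B + 1" using insert
      by (metis PowD Suc_eq_plus1 card_insert_disjoint finite_subset subsetD)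
    then show "ber F r B * ((1 - r x) * (real (card B) - (r x + ?mu))^2
          + r x * (real (card (insert x B)) - (r x + ?mu))^2)
       = ber F r B * (real (card B) - ?mu)^2 + ber F r B * (r x * (1 - r x))"
      by (simp add: power2_eq_square algebra_simps)
  qed
  also have "\<dots> = (\<Sum>i\<in>F. r i * (1 - r i)) + r x * (1 - r x)"
    using insert ber_sum1[OF insert(1), of r]
    by (simp add: sum.distrib Ex_def sum_distrib_right[symmetric])
  finally show ?case using insert by simp
qed

lemma tv_ge:
  assumes "finite S" "\<And>A. A \<subseteq> S \<Longrightarrow> 0 \<le> g A \<and> g A \<le> 1"
  shows "Ex S p g - Ex S q g \<le> tv_ber S p q"
proof -
  have pt: "(ber S p A - ber S q A) * (g A - 1/2) = (ber S p A * g A - ber S q A * g A) - ((1/2) * ber S p A - (1/2) * ber S q A)" for A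
    by (simp add: algebra_simps)
  have "(\<Sum>A\<in>Pow S. (ber S p A - ber S q A) * (g A - 1/2))
      = (Ex S p g - Ex S q g) - ((1/2) * (\<Sum>A\<in>Pow S. ber S p A) - (1/2) * (\<Sum>A\<in>Pow S. ber S q A))"
    unfolding pt sum_subtractf sum_distrib_left[symmetric] Ex_def ..
  then have "Ex S p g - Ex S q g = (\<Sum>A\<in>Pow S. (ber S p A - ber S q A) * (g A - 1/2))"
    using ber_sum1[OF assms(1)] by simp
  also have "\<dots> \<le> (\<Sum>A\<in>Pow S. \<bar>ber S p A - ber S q A\<bar> * (1/2))"
  proof (rule sum_mono)
    fix A assume "A \<in> Pow S"
    then have "0 \<le> g A \<and> g A \<le> 1" using assms(2) by auto
    then have "\<bar>g A - 1/2\<bar> \<le> 1/2" unfolding abs_le_iff by linarith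
    then have "\<bar>ber S p A - ber S q A\<bar> * \<bar>g A - 1/2\<bar> \<le> \<bar>ber S p A - ber S q A\<bar> * (1/2)"
      by (rule mult_left_mono) simp
    then have "\<bar>(ber S p A - ber S q A) * (g A - 1/2)\<bar> \<le> \<bar>ber S p A - ber S q A\<bar> * (1/2)"
      by (simp only: abs_mult)
    then show "(ber S p A - ber S q A) * (g A - 1/2) \<le> \<bar>ber S p A - ber S q A\<bar> * (1/2)"
      by linarith
  qed
  also have "\<dots> = tv_ber S p q" unfolding tv_ber_def sum_distrib_right[symmetric] by simp
  finally show ?thesis .
qed

lemma tv_remove:
  assumes "finite S" "j \<in> S"
  shows "tv_ber (S - {j}) p q \<le> tv_ber S p q"
proof -
  have "(\<Sum>A\<in>Pow S. \<bar>ber S p A - ber S q A\<bar>) = (\<Sum>B\<in>Pow (S-{j}). \<bar>ber S p B - ber S q B\<bar> + \<bar>ber S p (insert j B) - ber S q (insert j B)\<bar>)"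
    by (rule pow_split[OF assms])
  also have "\<dots> = (\<Sum>B\<in>Pow (S-{j}). \<bar>(1 - p j) * ber (S-{j}) p B - (1 - q j) * ber (S-{j}) q B\<bar> + \<bar>p j * ber (S-{j}) p B - q j * ber (S-{j}) q B\<bar>)"
    using assms by (intro sum.cong) (auto simp: ber_out ber_in)
  also have "\<dots> \<ge> (\<Sum>B\<in>Pow (S-{j}). \<bar>ber (S-{j}) p B - ber (S-{j}) q B\<bar>)"
  proof (rule sum_mono)
    fix B
    let ?u = "ber (S-{j}) p B" and ?v = "ber (S-{j}) q B"
    have eq: "?u - ?v = ((1 - p j) * ?u - (1 - q j) * ?v) + (p j * ?u - q j * ?v)"
      by (simp add: algebra_simps)
    show "\<bar>?u - ?v\<bar> \<le> \<bar>(1 - p j) * ?u - (1 - q j) * ?v\<bar> + \<bar>p j * ?u - q j * ?v\<bar>"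
      by (subst eq) (rule abs_triangle_ineq)
  qed
  finally show ?thesis unfolding tv_ber_def by simp
qed

lemma tv_mono: "finite D \<Longrightarrow> finite T \<Longrightarrow> T \<inter> D = {} \<Longrightarrow> tv_ber T p q \<le> tv_ber (T \<union> D) p q"
proof (induction D rule: finite_induct)
  case empty then show ?case by simp
next
  case (insert x F)
  have "tv_ber T p q \<le> tv_ber (T \<union> F) p q" using insert by auto
  also have "tv_ber (T \<union> F) p q = tv_ber (insert x (T \<union> F) - {x}) p q"
    using insert by (metis Diff_insert_absorb Un_iff disjoint_iff insertCI)
  also have "\<dots> \<le> tv_ber (insert x (T \<union> F)) p q"
    using insert by (intro tv_remove) auto
  finally show ?case by simp
qed



lemma main_bound:
  assumes fin: "finite S" and SN: "S \<subseteq> {..<N}"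
    and ab: "\<And>i. i \<in> S \<Longrightarrow> 0 \<le> b i \<and> b i \<le> a i \<and> a i \<le> 1"
  defines "D \<equiv> (\<Sum>i\<in>S. a i - b i)"
  defines "V \<equiv> (\<Sum>i\<in>S. a i * (1 - a i)) + D"
  defines "K \<equiv> 2 * sqrt (V + 1)"
  defines "L \<equiv> D + 2 * K + 2"
  shows "tv_ber S a b \<ge> (3/4) * D / L"
proof -
  define m where "m = (\<Sum>i\<in>S. b i) - 1 - K"
  define h where "h = (\<lambda>x::real. max 0 (min 1 ((x - m) / L)))"
  define g where "g = (\<lambda>A::nat set. h (real (card A)))"
  define hyb where "hyb = (\<lambda>k i. if i < k then a i else b i)"
  have D0: "D \<ge> 0" unfolding D_def using ab by (intro sum_nonneg) auto
  have a0: "0 \<le> a i" if "i \<in> S" for i using ab[OF that] by linarith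
  have s0: "(\<Sum>i\<in>S. a i * (1 - a i)) \<ge> 0" using ab a0 by (intro sum_nonneg mult_nonneg_nonneg) auto
  have V0: "V \<ge> 0" unfolding V_def using D0 s0 by simp
  have K0: "K > 0" unfolding K_def using V0 by simp
  have KK: "K^2 = 4 * (V + 1)" unfolding K_def using V0 by (simp add: power_mult_distrib)
  have L0: "L > 0" unfolding L_def using D0 K0 by simp
  have hmono: "h x \<le> h y" if "x \<le> y" for x y
  proof -
    have "(x - m) / L \<le> (y - m) / L" using that L0 by (simp add: divide_right_mono)
    then show ?thesis unfolding h_def by simp
  qed
  have hstep: "h (x+1) - h x = 1 / L" if "m \<le> x" "x + 1 \<le> m + L" for x
  proof -
    have a1: "0 \<le> (x - m) / L" "(x + 1 - m) / L \<le> 1" using that L0 by (auto simp: field_simps)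
    have a2: "(x - m) / L \<le> 1" "0 \<le> (x + 1 - m) / L" using that L0 by (auto simp: field_simps)
    have "h (x+1) = (x + 1 - m) / L" "h x = (x - m) / L" unfolding h_def using a1 a2 by auto
    then show ?thesis using L0 by (simp add: field_simps)
  qed
  have g01: "0 \<le> g A \<and> g A \<le> 1" for A unfolding g_def h_def by simp
  have key: "(\<Sum>B\<in>Pow (S - {k}). ber (S - {k}) (hyb k) B * (g (insert k B) - g B)) \<ge> (3/4) / L"
    if kS: "k \<in> S" for k
  proof -
    define T where "T = S - {k}"
    define r where "r = hyb k"
    define mu where "mu = (\<Sum>i\<in>T. r i)"
    define var where "var = (\<Sum>i\<in>T. r i * (1 - r i))"
    have finT: "finite T" unfolding T_def using fin by simp
    have r01: "0 \<le> r i \<and> r i \<le> 1" if "i \<in> S" for i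
      unfolding r_def hyb_def using ab[OF that] by auto
    have rb: "b i \<le> r i \<and> r i \<le> a i" if "i \<in> S" for i
      unfolding r_def hyb_def using ab[OF that] by auto
    have rv: "r i * (1 - r i) \<le> a i * (1 - a i) + (a i - b i)" if "i \<in> S" for i
    proof (cases "r i = a i")
      case True then show ?thesis using ab[OF that] by simp
    next
      case False
      then have "r i = b i" unfolding r_def hyb_def by (auto split: if_splits)
      moreover have "(a i - b i) * (a i + b i - 1) \<le> (a i - b i) * 1"
        using ab[OF that] by (intro mult_left_mono) auto
      ultimately show ?thesis by (simp add: algebra_simps)
    qed
    have sumS: "(\<Sum>i\<in>S. f i) = f k + (\<Sum>i\<in>T. f i)" for f :: "nat \<Rightarrow> real"
      unfolding T_def using fin kS by (simp add: sum.remove)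
    have "var \<le> (\<Sum>i\<in>S. r i * (1 - r i))"
      unfolding var_def sumS using r01[OF kS] mult_nonneg_nonneg[of "r k" "1 - r k"] by simp
    also have "\<dots> \<le> (\<Sum>i\<in>S. a i * (1 - a i) + (a i - b i))"
      using rv by (intro sum_mono) auto
    also have "\<dots> = V" unfolding V_def D_def by (simp add: sum.distrib)
    finally have varV: "var \<le> V" .
    have "(\<Sum>i\<in>S. b i) \<le> (\<Sum>i\<in>S. r i)" using rb by (intro sum_mono) auto
    then have mu_lo: "(\<Sum>i\<in>S. b i) - 1 \<le> mu"
      unfolding mu_def sumS[of r] using r01[OF kS] by simp
    have "(\<Sum>i\<in>S. r i) \<le> (\<Sum>i\<in>S. a i)" using rb by (intro sum_mono) auto
    then have mu_hi: "mu \<le> (\<Sum>i\<in>S. b i) + D"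
      unfolding mu_def sumS[of r] D_def using r01[OF kS] by (simp add: sum_subtractf)
    have pw: "g (insert k B) - g B \<ge> (1 / L) * (1 - (real (card B) - mu)^2 / K^2)"
      if B: "B \<in> Pow T" for B
    proof -
      have kB: "k \<notin> B" using B unfolding T_def by auto
      have "finite B" using B finT finite_subset by auto
      then have cB: "real (card (insert k B)) = real (card B) + 1" using kB by simp
      define Y where "Y = real (card B)"
      have gd: "g (insert k B) - g B = h (Y + 1) - h Y" unfolding g_def Y_def cB by simp
      show ?thesis
      proof (cases "\<bar>Y - mu\<bar> < K")
        case True
        have "m \<le> Y" using True mu_lo unfolding m_def by linarith
        moreover have "Y + 1 \<le> m + L" using True mu_hi unfolding m_def L_def by linarith
        ultimately have "h (Y + 1) - h Y = 1 / L" by (rule hstep)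
        moreover have "(1/L) * (1 - (Y - mu)^2 / K^2) \<le> (1/L) * 1"
          using L0 by (intro mult_left_mono) auto
        ultimately show ?thesis using gd Y_def by simp
      next
        case False
        then have "K^2 \<le> (Y - mu)^2" using K0
          by (metis abs_ge_zero abs_of_pos not_less power2_abs power_mono)
        then have "1 - (Y - mu)^2 / K^2 \<le> 0" using K0 by (simp add: field_simps)
        then have "(1 / L) * (1 - (Y - mu)^2 / K^2) \<le> 0" using L0
          by (intro mult_nonneg_nonpos) auto
        moreover have "h Y \<le> h (Y + 1)" by (rule hmono) simp
        ultimately show ?thesis using gd Y_def by simp
      qed
    qed
    have "(\<Sum>B\<in>Pow T. ber T r B * (g (insert k B) - g B))
        \<ge> (\<Sum>B\<in>Pow T. ber T r B * ((1 / L) * (1 - (real (card B) - mu)^2 / K^2)))"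
      using pw ber_nonneg[of T r] r01 unfolding T_def
      by (intro sum_mono mult_left_mono) auto
    also have "(\<Sum>B\<in>Pow T. ber T r B * ((1 / L) * (1 - (real (card B) - mu)^2 / K^2)))
        = (1 / L) * ((\<Sum>B\<in>Pow T. ber T r B) - Ex T r (\<lambda>A. (real (card A) - mu)^2) / K^2)"
      unfolding Ex_def
      by (simp add: sum_distrib_left sum_subtractf sum_divide_distrib algebra_simps)
    also have "\<dots> = (1 / L) * (1 - var / K^2)"
      using ber_sum1[OF finT] ber_var[OF finT] unfolding mu_def var_def by simp
    finally have 1: "(1 / L) * (1 - var / K^2) \<le> (\<Sum>B\<in>Pow T. ber T r B * (g (insert k B) - g B))" .
    have "var / K^2 \<le> 1/4" using varV KK K0 V0 by (simp add: field_simps)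
    then have "(3/4) / L \<le> (1 / L) * (1 - var / K^2)" using L0 by (simp add: field_simps)
    with 1 show ?thesis unfolding T_def r_def by simp
  qed
  have diff: "Ex S (hyb (Suc k)) g - Ex S (hyb k) g = (if k \<in> S then (a k - b k) *
      (\<Sum>B\<in>Pow (S - {k}). ber (S - {k}) (hyb k) B * (g (insert k B) - g B)) else 0)" for k
  proof (cases "k \<in> S")
    case True
    have eqo: "ber (S - {k}) (hyb (Suc k)) B = ber (S - {k}) (hyb k) B" for B
      by (rule ber_cong) (auto simp: hyb_def)
    have ha: "hyb (Suc k) k = a k" "hyb k k = b k" by (auto simp: hyb_def)
    have "Ex S (hyb (Suc k)) g - Ex S (hyb k) g = (a k - b k) *
      (\<Sum>B\<in>Pow (S - {k}). ber (S - {k}) (hyb k) B * (g (insert k B) - g B))"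
      unfolding Ex_split[OF fin True] eqo ha sum_subtractf[symmetric] sum_distrib_left
      by (intro sum.cong refl) (simp add: algebra_simps)
    then show ?thesis using True by simp
  next
    case False
    have "Ex S (hyb (Suc k)) g = Ex S (hyb k) g"
      unfolding Ex_def using False
      by (intro sum.cong refl arg_cong2[where f="(*)"] ber_cong) (auto simp: hyb_def less_Suc_eq)
    then show ?thesis using False by simp
  qed
  have eN: "Ex S (hyb N) g = Ex S a g" unfolding Ex_def using SN
    by (intro sum.cong refl arg_cong2[where f="(*)"] ber_cong) (auto simp: hyb_def)
  have e0: "Ex S (hyb 0) g = Ex S b g" unfolding Ex_def
    by (intro sum.cong refl arg_cong2[where f="(*)"] ber_cong) (auto simp: hyb_def)
  have "(\<Sum>k<N. if k \<in> S then (a k - b k) * ((3/4) / L) else 0)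
      \<le> (\<Sum>k<N. Ex S (hyb (Suc k)) g - Ex S (hyb k) g)"
    unfolding diff
  proof (intro sum_mono)
    fix k assume "k \<in> {..<N}"
    show "(if k \<in> S then (a k - b k) * ((3/4) / L) else 0) \<le> (if k \<in> S then (a k - b k) *
      (\<Sum>B\<in>Pow (S - {k}). ber (S - {k}) (hyb k) B * (g (insert k B) - g B)) else 0)"
    proof (cases "k \<in> S")
      case True
      have "(a k - b k) * ((3/4) / L) \<le> (a k - b k) *
        (\<Sum>B\<in>Pow (S - {k}). ber (S - {k}) (hyb k) B * (g (insert k B) - g B))"
        using key[OF True] ab[OF True] by (intro mult_left_mono) auto
      then show ?thesis by (simp only: if_P[OF True])
    qed simp
  qed
  also have "\<dots> = Ex S a g - Ex S b g" using sum_lessThan_telescope[of "\<lambda>k. Ex S (hyb k) g" N] eN e0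
    by simp
  also have "\<dots> \<le> tv_ber S a b" using tv_ge[OF fin] g01 by blast
  finally have 2: "(\<Sum>k<N. if k \<in> S then (a k - b k) * ((3/4) / L) else 0) \<le> tv_ber S a b" .
  have "(\<Sum>k<N. if k \<in> S then (a k - b k) * ((3/4) / L) else 0) = (\<Sum>k\<in>{..<N} \<inter> S. (a k - b k) * ((3/4) / L))"
    by (rule sum.inter_restrict[OF finite_lessThan, symmetric])
  also have "{..<N} \<inter> S = S" using SN by auto
  also have "(\<Sum>k\<in>S. (a k - b k) * ((3/4) / L)) = (3/4) * D / L"
    unfolding D_def sum_distrib_right[symmetric] by simp
  finally have 3: "(\<Sum>k<N. if k \<in> S then (a k - b k) * ((3/4) / L) else 0) = (3/4) * D / L" .
  show ?thesis using 2 3 by linarith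
qed



lemma final_num:
  fixes D s t :: real
  assumes D0: "D \<ge> 0" and s0: "s \<ge> 0"
    and t: "t \<ge> (3/4) * D / (D + 2 * (2 * sqrt (s + D + 1)) + 2)"
  shows "t \<ge> (1/12) * min 1 (D / sqrt (s + 1))"
proof -
  define \<sigma> where "\<sigma> = sqrt (s + 1)"
  define W where "W = sqrt (s + D + 1)"
  have \<sigma>1: "\<sigma> \<ge> 1" unfolding \<sigma>_def using s0 by simp
  have \<sigma>2: "\<sigma>^2 = s + 1" unfolding \<sigma>_def using s0 by simp
  have W0: "W \<ge> 0" unfolding W_def using s0 D0 by simp
  have W2: "W^2 = s + D + 1" unfolding W_def using s0 D0 by simp
  have tt: "t \<ge> (3/4) * D / (D + 4 * W + 2)" using t unfolding W_def by simp
  have e1: "(4 * W)^2 = 16 * W^2" by (simp add: power_mult_distrib)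
  have e2: "(8 * x - 2)^2 = 64 * x^2 - 32 * x + 4" for x :: real
    by (simp add: power2_eq_square left_diff_distrib right_diff_distrib)
  have sq: "x^2 \<ge> x" if "x \<ge> 1" for x :: real
  proof -
    have "x * 1 \<le> x * x" using that by (intro mult_left_mono) auto
    then show ?thesis by (simp add: power2_eq_square)
  qed
  show ?thesis
  proof (cases "D \<le> \<sigma>")
    case True
    have "(4 * W)^2 \<le> (8 * \<sigma> - 2)^2"
      unfolding e1 e2 using W2 \<sigma>2 True sq[OF \<sigma>1] by linarith
    then have "4 * W \<le> 8 * \<sigma> - 2" using \<sigma>1 power2_le_imp_le[of "4 * W" "8 * \<sigma> - 2"] by linarith
    then have den: "D + 4 * W + 2 \<le> 9 * \<sigma>" using True by linarith
    have "(3/4) * D / (9 * \<sigma>) \<le> (3/4) * D / (D + 4 * W + 2)"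
      using den D0 W0 by (intro divide_left_mono) auto
    moreover have "min 1 (D / \<sigma>) \<le> D / \<sigma>" by (rule min.cobounded2)
    moreover have "(1/12) * (D / \<sigma>) = (3/4) * D / (9 * \<sigma>)" by simp
    ultimately show ?thesis using tt unfolding \<sigma>_def by linarith
  next
    case False
    then have D1: "D \<ge> 1" "D > \<sigma>" using \<sigma>1 by auto
    have "\<sigma>^2 \<le> D^2" using D1 \<sigma>1 by (intro power_mono) auto
    then have "(4 * W)^2 \<le> (8 * D - 2)^2"
      unfolding e1 e2 using W2 \<sigma>2 sq[OF D1(1)] by linarith
    then have "4 * W \<le> 8 * D - 2" using D1 power2_le_imp_le[of "4 * W" "8 * D - 2"] by linarith
    then have den: "D + 4 * W + 2 \<le> 9 * D" by linarith
    have "(3/4) * D / (9 * D) \<le> (3/4) * D / (D + 4 * W + 2)"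
      using den D0 W0 D1 by (intro divide_left_mono) auto
    moreover have "(3/4) * D / (9 * D) = 1/12" using D1 by simp
    moreover have "min 1 (D / sqrt (s + 1)) \<le> 1" by (rule min.cobounded1)
    ultimately show ?thesis using tt by linarith
  qed
qed

lemma tv_sym: "tv_ber S p q = tv_ber S q p"
  unfolding tv_ber_def by (simp add: abs_minus_commute)

lemma tv_nonneg: "tv_ber S p q \<ge> 0"
  unfolding tv_ber_def by (simp add: sum_nonneg)

lemma half_bound:
  assumes fin: "finite S" and SN: "S \<subseteq> {..<N}"
    and ab: "\<And>i. i \<in> S \<Longrightarrow> 0 \<le> b i \<and> b i \<le> a i \<and> a i \<le> 1"
  shows "tv_ber S a b \<ge> (1/12) * Phi S a b"
proof (cases "S = {}")
  case True then show ?thesis by (simp add: Phi_def tv_nonneg)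
next
  case False
  define D where "D = (\<Sum>i\<in>S. a i - b i)"
  define s where "s = (\<Sum>i\<in>S. a i * (1 - a i))"
  have D0: "D \<ge> 0" unfolding D_def using ab by (intro sum_nonneg) auto
  have a0: "0 \<le> a i" if "i \<in> S" for i using ab[OF that] by linarith
  have s0: "s \<ge> 0" unfolding s_def using ab a0 by (intro sum_nonneg mult_nonneg_nonneg) auto
  have absD: "(\<Sum>i\<in>S. \<bar>a i - b i\<bar>) = D" unfolding D_def
    using ab by (intro sum.cong refl) auto
  have Ph: "Phi S a b = min 1 (D / sqrt (s + 1))"
    unfolding Phi_def using False absD s_def by simp
  have m: "tv_ber S a b \<ge> (3/4) * D / (D + 2 * (2 * sqrt (s + D + 1)) + 2)"
    using main_bound[OF fin SN ab] unfolding D_def s_def by simp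
  show ?thesis unfolding Ph by (rule final_num[OF D0 s0 m])
qed

theorem theorem3:
  fixes n :: nat and p q :: "nat \<Rightarrow> real"
  assumes "n \<ge> 1"
    and "\<forall>i\<in>{1..n}. 0 \<le> p i \<and> p i \<le> 1"
    and "\<forall>i\<in>{1..n}. 0 \<le> q i \<and> q i \<le> 1"
  defines "I \<equiv> {i\<in>{1..n}. p i \<ge> q i}"
    and "J \<equiv> {1..n} - {i\<in>{1..n}. p i \<ge> q i}"
  shows "tv_ber {1..n} p q \<ge> max (tv_ber I p q) (tv_ber J p q)
     \<and> max (tv_ber I p q) (tv_ber J p q) \<ge> (1/12) * max (Phi I p q) (Phi J q p)"
proof -
  have IS: "I \<subseteq> {1..n}" and JS: "J \<subseteq> {1..n}" unfolding I_def J_def by auto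
  have finI: "finite I" and finJ: "finite J" using IS JS finite_subset by auto
  have "tv_ber I p q \<le> tv_ber (I \<union> ({1..n} - I)) p q"
    using finI by (intro tv_mono) auto
  also have "I \<union> ({1..n} - I) = {1..n}" using IS by auto
  finally have t1: "tv_ber I p q \<le> tv_ber {1..n} p q" .
  have "tv_ber J p q \<le> tv_ber (J \<union> ({1..n} - J)) p q"
    using finJ by (intro tv_mono) auto
  also have "J \<union> ({1..n} - J) = {1..n}" using JS by auto
  finally have t2: "tv_ber J p q \<le> tv_ber {1..n} p q" .
  have SN: "I \<subseteq> {..<Suc n}" "J \<subseteq> {..<Suc n}" using IS JS by auto
  have b1: "tv_ber I p q \<ge> (1/12) * Phi I p q"
    using assms(2,3) by (intro half_bound[OF finI SN(1)]) (auto simp: I_def)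
  have b2: "tv_ber J q p \<ge> (1/12) * Phi J q p"
    using assms(2,3) by (intro half_bound[OF finJ SN(2)]) (auto simp: J_def)
  have b2': "tv_ber J p q \<ge> (1/12) * Phi J q p" using b2 tv_sym by metis
  show ?thesis using t1 t2 b1 b2' by (auto simp: max_def)
qed

end
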